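(* Let $K$ be a Kripke structure over $\mathbf{AP}$, $D(K)$ its deadlock extension, and $s$ a state of $K$. Then for every $\mathsf{CTL}^*_\infty$ state formula $\varphi$: $s\models\varphi$ in $K$ iff $s\models\mathbf{D}(\varphi)$ in $D(K)$; and for every $\mathsf{CTL}^*_\delta$ state formula $\varphi$: $s\models\varphi$ in $D(K)$ iff $s\models\mathbf{E}(\varphi)$ in $K$.
   Context: A Kripke structure is $K=(S,L,\to)$ with $L:S\to\mathcal{P}(\mathbf{AP})$ and $\to\subseteq S\times S$ (not necessarily total). Paths are finite sequences $s_0,\dots,s_n$ or infinite sequences $s_0,s_1,\dots$ with $s_k\to s_{k+1}$; a path is maximal if infinite or if its last state has no successor. The deadlock extension $D(K)$ adds a fresh state $s_\delta$ labelled $\{\delta\}$, where $\delta\notin\mathbf{AP}$ is a fresh atomic proposition, a transition $s_\delta\to s_\delta$, and a transition $u\to s_\delta$ from every state $u$ of $K$ without successors. $\mathsf{CTL}^*_\infty$: state formulas $\varphi::=p\mid\neg\varphi\mid\bigwedge\Phi'\mid\exists\psi$ and path formulas $\psi::=\varphi\mid\neg\psi\mid\bigwedge\Psi'\mid\psi\,\mathsf{U}\,\psi\mid\infty$ ($p\in\mathbf{AP}$, $\Phi',\Psi'$ arbitrary sets). $\mathsf{CTL}^*_\delta$ is the same but without $\infty$ and with atomic propositions from $\mathbf{AP}\cup\{\delta\}$. Validity (state formulas at states, path formulas on maximal paths): $s\models p$ iff $p\in L(s)$; negation and conjunction as usual; $s\models\exists\psi$ iff some maximal path $\pi$ from $s$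 has $\pi\models\psi$; $\pi\models\varphi$ iff its first state satisfies $\varphi$; $\pi\models\psi\,\mathsf{U}\,\psi'$ iff some suffix $\pi'$ of $\pi$ has $\pi'\models\psi'$ and $\pi''\models\psi$ for every suffix $\pi''$ of $\pi$ of which $\pi'$ is a proper suffix; $\pi\models\infty$ iff $\pi$ is infinite. Abbreviations: $\top=\bigwedge\emptyset$, $\psi\vee\psi'=\neg(\neg\psi\wedge\neg\psi')$, $\mathsf{F}\psi=\top\,\mathsf{U}\,\psi$, $\mathsf{G}\psi=\neg\mathsf{F}\neg\psi$. The mapping $\mathbf{D}$ from $\mathsf{CTL}^*_\infty$ to $\mathsf{CTL}^*_\delta$ formulas: $\mathbf{D}(p)=p$; $\mathbf{D}(\neg\varphi)=\neg\delta\wedge\neg\mathbf{D}(\varphi)$; $\mathbf{D}(\bigwedge_{i}\varphi_i)=\bigwedge_i\mathbf{D}(\varphi_i)$; $\mathbf{D}(\exists\psi)=\exists\mathbf{D}(\psi)$; $\mathbf{D}(\neg\psi)=\neg\delta\wedge\neg\mathbf{D}(\psi)$; $\mathbf{D}(\bigwedge_i\psi_i)=\bigwedge_i\mathbf{D}(\psi_i)$; $\mathbf{D}(\psi\,\mathsf{U}\,\psi')=\mathbf{D}(\psi)\,\mathsf{U}\,\mathbf{D}(\psi')$; $\mathbf{D}(\infty)=\neg\mathsf{F}\delta$ (state formulas used as path formulas are translated by the state clauses). The mapping $\mathbf{E}$ from $\mathsf{CTL}^*_\delta$ to $\mathsf{CTL}^*_\infty$ formulas: $\mathbf{E}(p)=p$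 for $p\in\mathbf{AP}$; $\mathbf{E}(\delta)=\neg\top$; $\mathbf{E}$ commutes with $\neg$, $\bigwedge$ and $\exists$; and $\mathbf{E}(\psi\,\mathsf{U}\,\psi')=X\vee(\mathbf{E}(\psi)\,\mathsf{U}\,\mathbf{E}(\psi'))$, where $X=\neg\infty\wedge\mathsf{G}\,\mathbf{E}(\psi)$ if $s_\delta\models\exists\psi'$ (in a deadlock extension; this depends only on $\psi'$ since the only maximal path from $s_\delta$ is $s_\delta,s_\delta,\dots$), and $X=\mathbf{E}(\psi)\,\mathsf{U}\,\neg\top$ otherwise. *)

theory Defs
  imports Main
begin

text \<open>A Kripke structure over atomic propositions of type 'ap is given by a transition
relation R on the state type 's (not necessarily total) and a labelling L.\<close>

datatype 's path = FinP "'s list" | InfP "nat \<Rightarrow> 's"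

fun pfirst :: "'s path \<Rightarrow> 's" where
  "pfirst (FinP xs) = hd xs"
| "pfirst (InfP f) = f 0"

fun pvalid :: "nat \<Rightarrow> 's path \<Rightarrow> bool" where
  "pvalid k (FinP xs) = (k < length xs)"
| "pvalid k (InfP f) = True"

fun psuffix :: "nat \<Rightarrow> 's path \<Rightarrow> 's path" where
  "psuffix k (FinP xs) = FinP (drop k xs)"
| "psuffix k (InfP f) = InfP (\<lambda>i. f (i + k))"

fun pinfinite :: "'s path \<Rightarrow> bool" where
  "pinfinite (FinP xs) = False"
| "pinfinite (InfP f) = True"

fun is_path :: "('s \<Rightarrow> 's \<Rightarrow> bool) \<Rightarrow> 's path \<Rightarrow> bool" where
  "is_path R (FinP xs) = (xs \<noteq> [] \<and> (\<forall>i. Suc i < length xs \<longrightarrow> R (xs ! i) (xs ! Suc i)))"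
| "is_path R (InfP f) = (\<forall>i. R (f i) (f (Suc i)))"

fun is_maximal :: "('s \<Rightarrow> 's \<Rightarrow> bool) \<Rightarrow> 's path \<Rightarrow> bool" where
  "is_maximal R (FinP xs) = (\<not> (\<exists>t. R (last xs) t))"
| "is_maximal R (InfP f) = True"

definition maximal_path :: "('s \<Rightarrow> 's \<Rightarrow> bool) \<Rightarrow> 's path \<Rightarrow> bool" where
  "maximal_path R p \<longleftrightarrow> is_path R p \<and> is_maximal R p"

text \<open>States of D(K) are 's option, None being the fresh state s_delta.
Atomic propositions of D(K) are 'ap option, None being the fresh proposition delta.\<close>

fun DR :: "('s \<Rightarrow> 's \<Rightarrow> bool) \<Rightarrow> 's option \<Rightarrow> 's option \<Rightarrow> bool" where
  "DR R (Some u) (Some v) = R u v"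
| "DR R (Some u) None = (\<forall>v. \<not> R u v)"
| "DR R None None = True"
| "DR R None (Some v) = False"

fun DL :: "('s \<Rightarrow> 'ap set) \<Rightarrow> 's option \<Rightarrow> 'ap option set" where
  "DL L (Some u) = Some ` L u"
| "DL L None = {None}"

text \<open>Conjunctions range over arbitrary families indexed by subsets of the type 'i.\<close>

datatype ('ap, 'i) sf =
    SProp 'ap
  | SNot "('ap, 'i) sf"
  | SAnd "'i set" "'i \<Rightarrow> ('ap, 'i) sf"
  | SEx "('ap, 'i) pf"
and ('ap, 'i) pf =
    PSt "('ap, 'i) sf"
  | PNot "('ap, 'i) pf"
  | PAnd "'i set" "'i \<Rightarrow> ('ap, 'i) pf"
  | PUntil "('ap, 'i) pf" "('ap, 'i) pf"
  | PInf

primrec sat_s :: "('s \<Rightarrow> 's \<Rightarrow> bool) \<Rightarrow> ('s \<Rightarrow> 'ap set) \<Rightarrow> 's \<Rightarrow> ('ap, 'i) sf \<Rightarrow> bool"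
and sat_p :: "('s \<Rightarrow> 's \<Rightarrow> bool) \<Rightarrow> ('s \<Rightarrow> 'ap set) \<Rightarrow> 's path \<Rightarrow> ('ap, 'i) pf \<Rightarrow> bool" where
  "sat_s R L s (SProp p) = (p \<in> L s)"
| "sat_s R L s (SNot \<phi>) = (\<not> sat_s R L s \<phi>)"
| "sat_s R L s (SAnd I f) = (\<forall>i\<in>I. sat_s R L s (f i))"
| "sat_s R L s (SEx \<psi>) = (\<exists>\<pi>. maximal_path R \<pi> \<and> pfirst \<pi> = s \<and> sat_p R L \<pi> \<psi>)"
| "sat_p R L \<pi> (PSt \<phi>) = sat_s R L (pfirst \<pi>) \<phi>"
| "sat_p R L \<pi> (PNot \<psi>) = (\<not> sat_p R L \<pi> \<psi>)"
| "sat_p R L \<pi> (PAnd I f) = (\<forall>i\<in>I. sat_p R L \<pi> (f i))"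
| "sat_p R L \<pi> (PUntil \<psi> \<psi>') =
     (\<exists>k. pvalid k \<pi> \<and> sat_p R L (psuffix k \<pi>) \<psi>' \<and> (\<forall>j<k. sat_p R L (psuffix j \<pi>) \<psi>))"
| "sat_p R L \<pi> PInf = pinfinite \<pi>"

datatype ('ap, 'i) dsf =
    DSProp "'ap option"
  | DSNot "('ap, 'i) dsf"
  | DSAnd "'i set" "'i \<Rightarrow> ('ap, 'i) dsf"
  | DSEx "('ap, 'i) dpf"
and ('ap, 'i) dpf =
    DPSt "('ap, 'i) dsf"
  | DPNot "('ap, 'i) dpf"
  | DPAnd "'i set" "'i \<Rightarrow> ('ap, 'i) dpf"
  | DPUntil "('ap, 'i) dpf" "('ap, 'i) dpf"

primrec sat_ds :: "('s \<Rightarrow> 's \<Rightarrow> bool) \<Rightarrow> ('s \<Rightarrow> 'ap option set) \<Rightarrow> 's \<Rightarrow> ('ap, 'i) dsf \<Rightarrow> bool"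
and sat_dp :: "('s \<Rightarrow> 's \<Rightarrow> bool) \<Rightarrow> ('s \<Rightarrow> 'ap option set) \<Rightarrow> 's path \<Rightarrow> ('ap, 'i) dpf \<Rightarrow> bool" where
  "sat_ds R L s (DSProp p) = (p \<in> L s)"
| "sat_ds R L s (DSNot \<phi>) = (\<not> sat_ds R L s \<phi>)"
| "sat_ds R L s (DSAnd I f) = (\<forall>i\<in>I. sat_ds R L s (f i))"
| "sat_ds R L s (DSEx \<psi>) = (\<exists>\<pi>. maximal_path R \<pi> \<and> pfirst \<pi> = s \<and> sat_dp R L \<pi> \<psi>)"
| "sat_dp R L \<pi> (DPSt \<phi>) = sat_ds R L (pfirst \<pi>) \<phi>"
| "sat_dp R L \<pi> (DPNot \<psi>) = (\<not> sat_dp R L \<pi> \<psi>)"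
| "sat_dp R L \<pi> (DPAnd I f) = (\<forall>i\<in>I. sat_dp R L \<pi> (f i))"
| "sat_dp R L \<pi> (DPUntil \<psi> \<psi>') =
     (\<exists>k. pvalid k \<pi> \<and> sat_dp R L (psuffix k \<pi>) \<psi>' \<and> (\<forall>j<k. sat_dp R L (psuffix j \<pi>) \<psi>))"

text \<open>Two fixed distinct indices (exist whenever 'i has at least two elements),
used to express binary conjunction as a conjunction over a two-element set.\<close>
definition idx2 :: "'i \<times> 'i" where
  "idx2 = (SOME p. fst p \<noteq> snd p)"

definition sand2 :: "('ap, 'i) sf \<Rightarrow> ('ap, 'i) sf \<Rightarrow> ('ap, 'i) sf" where
  "sand2 a b = SAnd {fst idx2, snd idx2} (\<lambda>i. if i = fst idx2 then a else b)"
definition pand2 :: "('ap, 'i) pf \<Rightarrow> ('ap, 'i) pf \<Rightarrow> ('ap, 'i) pf" where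
  "pand2 a b = PAnd {fst idx2, snd idx2} (\<lambda>i. if i = fst idx2 then a else b)"
definition dsand2 :: "('ap, 'i) dsf \<Rightarrow> ('ap, 'i) dsf \<Rightarrow> ('ap, 'i) dsf" where
  "dsand2 a b = DSAnd {fst idx2, snd idx2} (\<lambda>i. if i = fst idx2 then a else b)"
definition dpand2 :: "('ap, 'i) dpf \<Rightarrow> ('ap, 'i) dpf \<Rightarrow> ('ap, 'i) dpf" where
  "dpand2 a b = DPAnd {fst idx2, snd idx2} (\<lambda>i. if i = fst idx2 then a else b)"

definition stop :: "('ap, 'i) sf" where "stop = SAnd {} (\<lambda>_. undefined)"
definition ptop :: "('ap, 'i) pf" where "ptop = PAnd {} (\<lambda>_. undefined)"
definition dptop :: "('ap, 'i) dpf" where "dptop = DPAnd {} (\<lambda>_. undefined)"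

definition por :: "('ap, 'i) pf \<Rightarrow> ('ap, 'i) pf \<Rightarrow> ('ap, 'i) pf" where
  "por a b = PNot (pand2 (PNot a) (PNot b))"
definition pF :: "('ap, 'i) pf \<Rightarrow> ('ap, 'i) pf" where
  "pF a = PUntil ptop a"
definition pG :: "('ap, 'i) pf \<Rightarrow> ('ap, 'i) pf" where
  "pG a = PNot (pF (PNot a))"
definition dpF :: "('ap, 'i) dpf \<Rightarrow> ('ap, 'i) dpf" where
  "dpF a = DPUntil dptop a"

definition dDelta :: "('ap, 'i) dsf" where "dDelta = DSProp None"

primrec Ds :: "('ap, 'i) sf \<Rightarrow> ('ap, 'i) dsf" and Dp :: "('ap, 'i) pf \<Rightarrow> ('ap, 'i) dpf" where
  "Ds (SProp p) = DSProp (Some p)"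
| "Ds (SNot \<phi>) = dsand2 (DSNot dDelta) (DSNot (Ds \<phi>))"
| "Ds (SAnd I f) = DSAnd I (\<lambda>i. Ds (f i))"
| "Ds (SEx \<psi>) = DSEx (Dp \<psi>)"
| "Dp (PSt \<phi>) = DPSt (Ds \<phi>)"
| "Dp (PNot \<psi>) = dpand2 (DPNot (DPSt dDelta)) (DPNot (Dp \<psi>))"
| "Dp (PAnd I f) = DPAnd I (\<lambda>i. Dp (f i))"
| "Dp (PUntil \<psi> \<psi>') = DPUntil (Dp \<psi>) (Dp \<psi>')"
| "Dp PInf = DPNot (dpF (DPSt dDelta))"

text \<open>Whether s_delta satisfies exists-psi' in a deadlock extension; evaluated in the
deadlock extension of the one-state Kripke structure without transitions (any deadlock
extension gives the same answer, as the only maximal path from s_delta is constant).\<close>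
definition delta_cond :: "('ap, 'i) dpf \<Rightarrow> bool" where
  "delta_cond \<psi>' = sat_ds (DR (\<lambda>(_::unit) _. False)) (DL (\<lambda>_. {})) None (DSEx \<psi>')"

primrec Es :: "('ap, 'i) dsf \<Rightarrow> ('ap, 'i) sf" and Ep :: "('ap, 'i) dpf \<Rightarrow> ('ap, 'i) pf" where
  "Es (DSProp p) = (case p of Some q \<Rightarrow> SProp q | None \<Rightarrow> SNot stop)"
| "Es (DSNot \<phi>) = SNot (Es \<phi>)"
| "Es (DSAnd I f) = SAnd I (\<lambda>i. Es (f i))"
| "Es (DSEx \<psi>) = SEx (Ep \<psi>)"
| "Ep (DPSt \<phi>) = PSt (Es \<phi>)"
| "Ep (DPNot \<psi>) = PNot (Ep \<psi>)"
| "Ep (DPAnd I f) = PAnd I (\<lambda>i. Ep (f i))"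
| "Ep (DPUntil \<psi> \<psi>') =
     por (if delta_cond \<psi>' then pand2 (PNot PInf) (pG (Ep \<psi>))
          else PUntil (Ep \<psi>) (PSt (SNot stop)))
         (PUntil (Ep \<psi>) (Ep \<psi>'))"

end

theory Submission
  imports Defs
begin

fun ext :: "'s path \<Rightarrow> 's option path" where
  "ext (FinP xs) = InfP (\<lambda>i. if i < length xs then Some (xs ! i) else None)"
| "ext (InfP f) = InfP (\<lambda>i. Some (f i))"

definition nonep :: "'s option path" where "nonep = InfP (\<lambda>_. None)"

lemma DR_None: "DR R None x \<longleftrightarrow> x = None"
  by (cases x) auto

lemma DR_succ: "\<exists>v. DR R u v"
proof (cases u)
  case None then show ?thesis by (intro exI[of _ None]) simp
next
  case (Some a) then show ?thesis
    by (cases "\<exists>v. R a v") (auto intro: exI[of _ None] exI[of _ "Some _"])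
qed

lemma maximal_ext: "maximal_path R \<pi> \<Longrightarrow> maximal_path (DR R) (ext \<pi>)"
proof (cases \<pi>)
  case (FinP xs)
  assume m: "maximal_path R \<pi>"
  have "DR R (if i < length xs then Some (xs ! i) else None)
          (if Suc i < length xs then Some (xs ! Suc i) else None)" for i
  proof -
    consider "Suc i < length xs" | "Suc i = length xs" | "Suc i > length xs" by linarith
    then show ?thesis
    proof cases
      case 1 then show ?thesis using m FinP by (auto simp: maximal_path_def)
    next
      case 2
      then have "last xs = xs ! i" using last_conv_nth[of xs] by (metis diff_Suc_1 list.size(3) nat.distinct(1))
      then show ?thesis using m FinP 2 by (auto simp: maximal_path_def)
    next
      case 3 then show ?thesis by auto
    qed
  qed
  then show ?thesis using FinP by (simp add: maximal_path_def)
next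
  case (InfP f)
  assume "maximal_path R \<pi>"
  then show ?thesis using InfP by (simp add: maximal_path_def)
qed

lemma maximal_nonempty: "maximal_path R \<pi> \<Longrightarrow> pvalid 0 \<pi>"
  by (cases \<pi>) (auto simp: maximal_path_def)

lemma pfirst_ext: "maximal_path R \<pi> \<Longrightarrow> pfirst (ext \<pi>) = Some (pfirst \<pi>)"
  by (cases \<pi>) (auto simp: maximal_path_def hd_conv_nth)

lemma pvalid_mono: "pvalid k \<pi> \<Longrightarrow> j \<le> k \<Longrightarrow> pvalid j \<pi>"
  by (cases \<pi>) auto

lemma suffix_ext: "pvalid k \<pi> \<Longrightarrow> psuffix k (ext \<pi>) = ext (psuffix k \<pi>)"
  by (cases \<pi>) (auto simp: fun_eq_iff add.commute)

lemma suffix_ext_invalid: "\<not> pvalid k \<pi> \<Longrightarrow> psuffix k (ext \<pi>) = nonep"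
  by (cases \<pi>) (auto simp: fun_eq_iff nonep_def)

lemma pvalid_ext[simp]: "pvalid k (ext \<pi>)"
  by (cases \<pi>) auto

lemma psuffix_0[simp]: "psuffix 0 \<pi> = \<pi>"
  by (cases \<pi>) auto

lemma suffix_nonep[simp]: "psuffix k nonep = nonep"
  by (simp add: nonep_def)

lemma pvalid_nonep[simp]: "pvalid k nonep"
  by (simp add: nonep_def)

lemma pfirst_nonep[simp]: "pfirst nonep = None"
  by (simp add: nonep_def)

lemma maximal_suffix: "maximal_path R \<pi> \<Longrightarrow> pvalid k \<pi> \<Longrightarrow> maximal_path R (psuffix k \<pi>)"
  by (cases \<pi>) (auto simp: maximal_path_def)

lemma maximal_from_None:
  assumes "maximal_path (DR R) \<rho>" "pfirst \<rho> = None"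
  shows "\<rho> = nonep"
proof (cases \<rho>)
  case (FinP xs)
  then show ?thesis using assms DR_succ[of R "last xs"] by (auto simp: maximal_path_def)
next
  case (InfP g)
  have "g i = None" for i
  proof (induction i)
    case 0 then show ?case using assms InfP by simp
  next
    case (Suc i)
    have "DR R (g i) (g (Suc i))" using assms InfP by (simp add: maximal_path_def)
    then show ?case using Suc DR_None by metis
  qed
  then show ?thesis using InfP by (simp add: nonep_def fun_eq_iff)
qed

lemma maximal_nonep: "maximal_path (DR R) nonep"
  by (simp add: maximal_path_def nonep_def)

lemma sat_ds_None_Ex: "sat_ds (DR R) L None (DSEx x) = sat_dp (DR R) L nonep x"
  using maximal_from_None maximal_nonep by fastforce

lemma ex_None: "(\<exists>\<pi>. maximal_path (DR R) \<pi> \<and> pfirst \<pi> = None \<and> P \<pi>) = P nonep"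
  using maximal_from_None maximal_nonep by fastforce

lemma maximal_D_exists: "\<exists>\<rho>. maximal_path (DR R) \<rho> \<and> pfirst \<rho> = u"
proof -
  define g where "g = rec_nat u (\<lambda>_ x. SOME v. DR R x v)"
  have "DR R (g i) (g (Suc i))" for i
    unfolding g_def by (simp add: someI_ex[OF DR_succ])
  moreover have "g 0 = u" by (simp add: g_def)
  ultimately show ?thesis by (intro exI[of _ "InfP g"]) (simp add: maximal_path_def)
qed

lemma maximal_D_back:
  assumes m: "maximal_path (DR R) \<rho>" and f: "pfirst \<rho> = Some s"
  shows "\<exists>\<pi>. maximal_path R \<pi> \<and> pfirst \<pi> = s \<and> \<rho> = ext \<pi>"
proof (cases \<rho>)
  case (FinP xs)
  then show ?thesis using m DR_succ[of R "last xs"] by (auto simp: maximal_path_def)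
next
  case (InfP g)
  have step: "DR R (g i) (g (Suc i))" for i using m InfP by (simp add: maximal_path_def)
  have g0: "g 0 = Some s" using f InfP by simp
  show ?thesis
  proof (cases "\<exists>i. g i = None")
    case False
    define f' where "f' = (\<lambda>i. the (g i))"
    have gs: "g i = Some (f' i)" for i using False f'_def by (cases "g i") (auto simp del: not_None_eq)
    have "R (f' i) (f' (Suc i))" for i using step[of i] gs[of i] gs[of "Suc i"] by simp
    then have "maximal_path R (InfP f')" by (simp add: maximal_path_def)
    moreover have "\<rho> = ext (InfP f')" using InfP gs by (simp add: fun_eq_iff)
    moreover have "pfirst (InfP f') = s" using g0 gs[of 0] by simp
    ultimately show ?thesis by blast
  next
    case True
    define n where "n = (LEAST i. g i = None)"
    have gn: "g n = None" unfolding n_def using True by (meson LeastI)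
    have lt: "i < n \<Longrightarrow> g i \<noteq> None" for i unfolding n_def using not_less_Least by blast
    have n0: "n > 0" using gn g0 by (cases n) auto
    have ge: "g (n + d) = None" for d
    proof (induction d)
      case 0 then show ?case using gn by simp
    next
      case (Suc d)
      have "DR R (g (n + d)) (g (Suc (n + d)))" using step by blast
      then show ?case using Suc DR_None by (metis add_Suc_right)
    qed
    have ge': "i \<ge> n \<Longrightarrow> g i = None" for i using ge[of "i - n"] by simp
    define xs where "xs = map (\<lambda>i. the (g i)) [0..<n]"
    have len: "length xs = n" by (simp add: xs_def)
    have xsn: "i < n \<Longrightarrow> g i = Some (xs ! i)" for i using lt[of i] by (auto simp: xs_def)
    have path: "is_path R (FinP xs)"
    proof -
      have "R (xs ! i) (xs ! Suc i)" if "Suc i < length xs" for i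
        using step[of i] xsn[of i] xsn[of "Suc i"] that len by simp
      then show ?thesis using len n0 by auto
    qed
    have "last xs = xs ! (n - 1)" using len n0 last_conv_nth[of xs] by auto
    moreover have "DR R (g (n - 1)) (g n)" using step[of "n - 1"] n0 by simp
    ultimately have "\<not> (\<exists>t. R (last xs) t)" using xsn[of "n - 1"] n0 gn by simp
    with path have "maximal_path R (FinP xs)" by (simp add: maximal_path_def)
    moreover have "\<rho> = ext (FinP xs)" using InfP xsn ge' len by (auto simp: fun_eq_iff)
    moreover have "pfirst (FinP xs) = s" using xsn[of 0] n0 g0 len
      by (simp add: hd_conv_nth) (metis hd_conv_nth list.size(3) less_irrefl)
    ultimately show ?thesis by blast
  qed
qed

lemma idx2_distinct:
  assumes "infinite (UNIV :: 'i set)"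
  shows "fst (idx2 :: 'i \<times> 'i) \<noteq> snd idx2"
proof -
  obtain a :: 'i where True by blast
  obtain b :: 'i where "b \<noteq> a" using assms
    by (metis UNIV_I finite.emptyI finite_insert insertCI subsetI finite_subset)
  then have "\<exists>p :: 'i \<times> 'i. fst p \<noteq> snd p" by (intro exI[of _ "(a, b)"]) auto
  then show ?thesis unfolding idx2_def by (rule someI_ex)
qed

lemma none_true:
  fixes \<phi> :: "('ap, 'i) sf" and \<psi> :: "('ap, 'i) pf"
  shows "sat_ds (DR R) (DL L) None (Ds \<phi>) \<Longrightarrow> sat_s R L u \<phi>"
    and "sat_dp (DR R) (DL L) nonep (Dp \<psi>) \<Longrightarrow> maximal_path R \<pi> \<Longrightarrow> sat_p R L \<pi> \<psi>"
proof (induct \<phi> and \<psi> arbitrary: u and \<pi>)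
  case (SProp x)
  then show ?case by auto
next
  case (SNot \<phi>)
  then show ?case by (simp add: dsand2_def dDelta_def)
next
  case (SAnd I f)
  then show ?case by auto
next
  case (SEx \<psi>)
  obtain \<rho> where r: "maximal_path (DR R) \<rho>" "pfirst \<rho> = Some u"
    using maximal_D_exists by blast
  obtain \<pi> where p: "maximal_path R \<pi>" "pfirst \<pi> = u"
    using maximal_D_back[OF r] by blast
  have "sat_dp (DR R) (DL L) nonep (Dp \<psi>)" using SEx.prems by (simp add: ex_None)
  then show ?case using SEx.hyps p by auto
next
  case (PSt \<phi>)
  then show ?case by simp
next
  case (PNot \<psi>)
  then show ?case by (simp add: dpand2_def dDelta_def)
next
  case (PAnd I f)
  then show ?case by auto
next
  case (PUntil \<psi> \<psi>')
  then have "sat_p R L \<pi> \<psi>'" by auto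
  then show ?case using maximal_nonempty[OF PUntil.prems(2)] by (auto intro!: exI[of _ 0])
next
  case PInf
  then show ?case by (auto simp: dpF_def dptop_def dDelta_def intro!: exI[of _ 0])
qed

lemma D_correct:
  fixes \<phi> :: "('ap, 'i) sf" and \<psi> :: "('ap, 'i) pf"
  assumes inf: "infinite (UNIV :: 'i set)"
  shows "sat_s R L u \<phi> \<longleftrightarrow> sat_ds (DR R) (DL L) (Some u) (Ds \<phi>)"
    and "maximal_path R \<pi> \<Longrightarrow> sat_p R L \<pi> \<psi> \<longleftrightarrow> sat_dp (DR R) (DL L) (ext \<pi>) (Dp \<psi>)"
proof (induct \<phi> and \<psi> arbitrary: u and \<pi>)
  case (SProp x)
  then show ?case by auto
next
  case (SNot \<phi>)
  then show ?case using idx2_distinct[OF inf] by (simp add: dsand2_def dDelta_def)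
next
  case (SAnd I f)
  then show ?case by auto
next
  case (SEx \<psi>)
  show ?case
  proof
    assume "sat_s R L u (SEx \<psi>)"
    then obtain \<pi> where p: "maximal_path R \<pi>" "pfirst \<pi> = u" "sat_p R L \<pi> \<psi>" by auto
    then show "sat_ds (DR R) (DL L) (Some u) (Ds (SEx \<psi>))"
      using SEx.hyps[OF p(1)] maximal_ext[OF p(1)] pfirst_ext[OF p(1)] by auto
  next
    assume "sat_ds (DR R) (DL L) (Some u) (Ds (SEx \<psi>))"
    then obtain \<rho> where r: "maximal_path (DR R) \<rho>" "pfirst \<rho> = Some u" "sat_dp (DR R) (DL L) \<rho> (Dp \<psi>)"
      by auto
    obtain \<pi> where p: "maximal_path R \<pi>" "pfirst \<pi> = u" "\<rho> = ext \<pi>"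
      using maximal_D_back[OF r(1,2)] by blast
    then show "sat_s R L u (SEx \<psi>)" using SEx.hyps[OF p(1)] r(3) by auto
  qed
next
  case (PSt \<phi>)
  then show ?case using pfirst_ext[OF PSt.prems] by simp
next
  case (PNot \<psi>)
  then show ?case using idx2_distinct[OF inf] pfirst_ext[OF PNot.prems]
    by (simp add: dpand2_def dDelta_def)
next
  case (PAnd I f)
  then show ?case by auto
next
  case (PUntil \<psi> \<psi>')
  note m = PUntil.prems
  have IH1: "pvalid j \<pi> \<Longrightarrow> sat_p R L (psuffix j \<pi>) \<psi> \<longleftrightarrow> sat_dp (DR R) (DL L) (psuffix j (ext \<pi>)) (Dp \<psi>)" for j
    using PUntil.hyps(1)[OF maximal_suffix[OF m]] suffix_ext by metis
  have IH2: "pvalid j \<pi> \<Longrightarrow> sat_p R L (psuffix j \<pi>) \<psi>' \<longleftrightarrow> sat_dp (DR R) (DL L) (psuffix j (ext \<pi>)) (Dp \<psi>')" for j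
    using PUntil.hyps(2)[OF maximal_suffix[OF m]] suffix_ext by metis
  have ext_valid: "pvalid k (ext \<pi>)" for k by (cases \<pi>) auto
  show ?case
  proof
    assume "sat_p R L \<pi> (PUntil \<psi> \<psi>')"
    then obtain k where k: "pvalid k \<pi>" "sat_p R L (psuffix k \<pi>) \<psi>'" "\<forall>j<k. sat_p R L (psuffix j \<pi>) \<psi>"
      by auto
    have "\<forall>j<k. sat_dp (DR R) (DL L) (psuffix j (ext \<pi>)) (Dp \<psi>)"
      using k IH1 pvalid_mono[OF k(1)] by auto
    then show "sat_dp (DR R) (DL L) (ext \<pi>) (Dp (PUntil \<psi> \<psi>'))"
      using k IH2 ext_valid by auto
  next
    assume "sat_dp (DR R) (DL L) (ext \<pi>) (Dp (PUntil \<psi> \<psi>'))"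
    then obtain k where k: "sat_dp (DR R) (DL L) (psuffix k (ext \<pi>)) (Dp \<psi>')"
      "\<forall>j<k. sat_dp (DR R) (DL L) (psuffix j (ext \<pi>)) (Dp \<psi>)" by auto
    show "sat_p R L \<pi> (PUntil \<psi> \<psi>')"
    proof (cases "pvalid k \<pi>")
      case True
      have "\<forall>j<k. sat_p R L (psuffix j \<pi>) \<psi>"
        using k IH1 pvalid_mono[OF True] by auto
      then show ?thesis using k IH2 True by auto
    next
      case False
      then have "sat_dp (DR R) (DL L) nonep (Dp \<psi>')" using k suffix_ext_invalid by metis
      then have "sat_p R L \<pi> \<psi>'" using none_true(2) m by blast
      then show ?thesis using maximal_nonempty[OF m] by (auto intro!: exI[of _ 0])
    qed
  qed
next
  case PInf
  show ?case
  proof (cases \<pi>)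
    case (FinP xs)
    then show ?thesis
      by (auto simp: dpF_def dptop_def dDelta_def intro!: exI[of _ "length xs"])
  next
    case (InfP f)
    then show ?thesis by (auto simp: dpF_def dptop_def dDelta_def)
  qed
qed

lemma none_indep:
  fixes \<phi> :: "('ap, 'i) dsf" and \<psi> :: "('ap, 'i) dpf"
    and R :: "'s \<Rightarrow> 's \<Rightarrow> bool" and R' :: "'t \<Rightarrow> 't \<Rightarrow> bool"
  shows "sat_ds (DR R) (DL L) None \<phi> = sat_ds (DR R') (DL L') None \<phi>"
    and "sat_dp (DR R) (DL L) nonep \<psi> = sat_dp (DR R') (DL L') nonep \<psi>"
proof (induct \<phi> and \<psi>)
  case (DSEx x)
  then show ?case by (simp add: ex_None)
qed auto

lemma delta_cond_iff: "delta_cond \<psi>' = sat_dp (DR R) (DL L) nonep \<psi>'"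
  unfolding delta_cond_def sat_ds.simps ex_None by (rule none_indep(2))

lemma E_correct:
  fixes \<phi> :: "('ap, 'i) dsf" and \<psi> :: "('ap, 'i) dpf"
  assumes inf: "infinite (UNIV :: 'i set)"
  shows "sat_ds (DR R) (DL L) (Some u) \<phi> \<longleftrightarrow> sat_s R L u (Es \<phi>)"
    and "maximal_path R \<pi> \<Longrightarrow> sat_dp (DR R) (DL L) (ext \<pi>) \<psi> \<longleftrightarrow> sat_p R L \<pi> (Ep \<psi>)"
proof (induct \<phi> and \<psi> arbitrary: u and \<pi>)
  case (DSProp x)
  then show ?case by (cases x) (auto simp: stop_def)
next
  case (DSNot \<phi>)
  then show ?case by simp
next
  case (DSAnd I f)
  then show ?case by auto
next
  case (DSEx \<psi>)
  show ?case
  proof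
    assume "sat_s R L u (Es (DSEx \<psi>))"
    then obtain \<pi> where p: "maximal_path R \<pi>" "pfirst \<pi> = u" "sat_p R L \<pi> (Ep \<psi>)" by auto
    then show "sat_ds (DR R) (DL L) (Some u) (DSEx \<psi>)"
      using DSEx.hyps[OF p(1)] maximal_ext[OF p(1)] pfirst_ext[OF p(1)] by auto
  next
    assume "sat_ds (DR R) (DL L) (Some u) (DSEx \<psi>)"
    then obtain \<rho> where r: "maximal_path (DR R) \<rho>" "pfirst \<rho> = Some u" "sat_dp (DR R) (DL L) \<rho> \<psi>"
      by auto
    obtain \<pi> where p: "maximal_path R \<pi>" "pfirst \<pi> = u" "\<rho> = ext \<pi>"
      using maximal_D_back[OF r(1,2)] by blast
    then show "sat_s R L u (Es (DSEx \<psi>))" using DSEx.hyps[OF p(1)] r(3) by auto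
  qed
next
  case (DPSt \<phi>)
  then show ?case using pfirst_ext[OF DPSt.prems] by simp
next
  case (DPNot \<psi>)
  then show ?case by simp
next
  case (DPAnd I f)
  then show ?case by auto
next
  case (DPUntil \<psi> \<psi>')
  note m = DPUntil.prems
  have IH1: "pvalid j \<pi> \<Longrightarrow> sat_p R L (psuffix j \<pi>) (Ep \<psi>) \<longleftrightarrow> sat_dp (DR R) (DL L) (psuffix j (ext \<pi>)) \<psi>" for j
    using DPUntil.hyps(1)[OF maximal_suffix[OF m]] suffix_ext by metis
  have IH2: "pvalid j \<pi> \<Longrightarrow> sat_p R L (psuffix j \<pi>) (Ep \<psi>') \<longleftrightarrow> sat_dp (DR R) (DL L) (psuffix j (ext \<pi>)) \<psi>'" for j
    using DPUntil.hyps(2)[OF maximal_suffix[OF m]] suffix_ext by metis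
  define D0 where "D0 = sat_dp (DR R) (DL L) nonep \<psi>'"
  define U where "U = (\<exists>k. pvalid k \<pi> \<and> sat_p R L (psuffix k \<pi>) (Ep \<psi>') \<and> (\<forall>j<k. sat_p R L (psuffix j \<pi>) (Ep \<psi>)))"
  define X where "X = (D0 \<and> \<not> pinfinite \<pi> \<and> (\<forall>k. pvalid k \<pi> \<longrightarrow> sat_p R L (psuffix k \<pi>) (Ep \<psi>)))"
  have Eu: "sat_p R L \<pi> (Ep (DPUntil \<psi> \<psi>')) \<longleftrightarrow> X \<or> U"
    using idx2_distinct[OF inf] delta_cond_iff[of \<psi>' R L]
    by (simp add: X_def U_def D0_def por_def pand2_def pG_def pF_def ptop_def stop_def) blast
  show ?case
  proof
    assume "sat_dp (DR R) (DL L) (ext \<pi>) (DPUntil \<psi> \<psi>')"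
    then obtain k where k: "sat_dp (DR R) (DL L) (psuffix k (ext \<pi>)) \<psi>'"
      "\<forall>j<k. sat_dp (DR R) (DL L) (psuffix j (ext \<pi>)) \<psi>" by auto
    show "sat_p R L \<pi> (Ep (DPUntil \<psi> \<psi>'))"
    proof (cases "pvalid k \<pi>")
      case True
      have "\<forall>j<k. sat_p R L (psuffix j \<pi>) (Ep \<psi>)"
        using k(2) IH1 pvalid_mono[OF True] by (meson less_imp_le)
      then have U using k(1) IH2[OF True] True unfolding U_def by blast
      then show ?thesis using Eu by blast
    next
      case False
      then have "D0" using k suffix_ext_invalid unfolding D0_def by metis
      moreover obtain xs where xs: "\<pi> = FinP xs" using False by (cases \<pi>) auto
      moreover have "\<forall>j. pvalid j \<pi> \<longrightarrow> sat_p R L (psuffix j \<pi>) (Ep \<psi>)"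
      proof (intro allI impI)
        fix j assume v: "pvalid j \<pi>"
        then have "j < k" using False xs by auto
        then show "sat_p R L (psuffix j \<pi>) (Ep \<psi>)" using k(2) IH1[OF v] by blast
      qed
      ultimately have X unfolding X_def by simp
      then show ?thesis using Eu by blast
    qed
  next
    assume "sat_p R L \<pi> (Ep (DPUntil \<psi> \<psi>'))"
    then have "X \<or> U" using Eu by blast
    then show "sat_dp (DR R) (DL L) (ext \<pi>) (DPUntil \<psi> \<psi>')"
    proof
      assume U
      then obtain k where k: "pvalid k \<pi>" "sat_p R L (psuffix k \<pi>) (Ep \<psi>')" "\<forall>j<k. sat_p R L (psuffix j \<pi>) (Ep \<psi>)"
        unfolding U_def by auto
      have "\<forall>j<k. sat_dp (DR R) (DL L) (psuffix j (ext \<pi>)) \<psi>"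
        using k(3) IH1 pvalid_mono[OF k(1)] by (meson less_imp_le)
      moreover have "sat_dp (DR R) (DL L) (psuffix k (ext \<pi>)) \<psi>'" using k(1,2) IH2 by blast
      ultimately show ?thesis by (simp only: sat_dp.simps pvalid_ext) blast
    next
      assume X
      then obtain xs where xs: "\<pi> = FinP xs" unfolding X_def by (cases \<pi>) auto
      have nv: "\<not> pvalid (length xs) \<pi>" using xs by simp
      have "sat_dp (DR R) (DL L) (psuffix (length xs) (ext \<pi>)) \<psi>'"
        using \<open>X\<close> suffix_ext_invalid[OF nv] unfolding X_def D0_def by simp
      moreover have "\<forall>j<length xs. sat_dp (DR R) (DL L) (psuffix j (ext \<pi>)) \<psi>"
      proof (intro allI impI)
        fix j assume "j < length xs"
        then have v: "pvalid j \<pi>" using xs by simp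
        then show "sat_dp (DR R) (DL L) (psuffix j (ext \<pi>)) \<psi>" using \<open>X\<close> IH1[OF v] unfolding X_def by blast
      qed
      ultimately show ?thesis by (simp only: sat_dp.simps) (use xs in \<open>intro exI[of _ "length xs"], simp\<close>)
    qed
  qed
qed

theorem theorem8p5:
  fixes R :: "'s \<Rightarrow> 's \<Rightarrow> bool" and L :: "'s \<Rightarrow> 'ap set" and s :: 's
  assumes "infinite (UNIV :: 'i set)"
  shows "(\<forall>\<phi> :: ('ap, 'i) sf. sat_s R L s \<phi> \<longleftrightarrow> sat_ds (DR R) (DL L) (Some s) (Ds \<phi>))
       \<and> (\<forall>\<phi> :: ('ap, 'i) dsf. sat_ds (DR R) (DL L) (Some s) \<phi> \<longleftrightarrow> sat_s R L s (Es \<phi>))"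
proof (intro conjI allI)
  fix \<phi> :: "('ap, 'i) sf"
  show "sat_s R L s \<phi> \<longleftrightarrow> sat_ds (DR R) (DL L) (Some s) (Ds \<phi>)"
    by (rule D_correct(1)[OF assms])
next
  fix \<phi> :: "('ap, 'i) dsf"
  show "sat_ds (DR R) (DL L) (Some s) \<phi> \<longleftrightarrow> sat_s R L s (Es \<phi>)"
    by (rule E_correct(1)[OF assms])
qed

end
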